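(* Let $A$ be a Dedekind domain. The following are equivalent: (1) $A$ has torsion divisor class group; (2) every overring of $A$ is a localization of $A$; (3) every overring of $A$ is well-centered on $A$; (4) there is no overring $B$ of $A$ with $B\neq A$, $B=A[b]$ for a single element $b$, and $\mathcal U(B)=\mathcal U(A)$.
   Context: An overring of $A$ is a subring of the field of fractions of $A$ containing $A$. $\mathcal U(R)$ is the unit group of a ring $R$. $B$ is well-centered on $A$ if for each $b\in B$ there is $u\in\mathcal U(B)$ with $ub\in A$. $B$ is a localization of $A$ if $B=S^{-1}A$ for a multiplicatively closed set $S$ of nonzero elements of $A$. *)

theory Defs
  imports Main
begin

text \<open>Setting: the field of fractions K of A is the ambient type 'k (a field);
  A is a subring of 'k such that every element of 'k is a quotient of elements of A.\<close>

definition subring :: "'k::field set \<Rightarrow> bool" where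
  "subring R \<longleftrightarrow> 0 \<in> R \<and> 1 \<in> R \<and> (\<forall>x\<in>R. \<forall>y\<in>R. x + y \<in> R \<and> x - y \<in> R \<and> x * y \<in> R)"

definition is_fraction_field_of :: "'k::field set \<Rightarrow> bool" where
  "is_fraction_field_of A \<longleftrightarrow> subring A \<and>
     (\<forall>x. \<exists>a\<in>A. \<exists>s\<in>A. s \<noteq> 0 \<and> x = a / s)"

definition units_of_ring :: "'k::field set \<Rightarrow> 'k set" where
  "units_of_ring R = {u \<in> R. u \<noteq> 0 \<and> inverse u \<in> R}"

definition ring_ideal :: "'k::field set \<Rightarrow> 'k set \<Rightarrow> bool" where
  "ring_ideal A I \<longleftrightarrow> I \<subseteq> A \<and> 0 \<in> I \<and> (\<forall>x\<in>I. \<forall>y\<in>I. x + y \<in> I) \<and>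
     (\<forall>a\<in>A. \<forall>x\<in>I. a * x \<in> I)"

definition fin_generated_ideal :: "'k::field set \<Rightarrow> 'k set \<Rightarrow> bool" where
  "fin_generated_ideal A I \<longleftrightarrow> (\<exists>F. finite F \<and> F \<subseteq> I \<and>
     I = {x. \<exists>c. (\<forall>f\<in>F. c f \<in> A) \<and> x = (\<Sum>f\<in>F. c f * f)})"

definition noetherian_ring :: "'k::field set \<Rightarrow> bool" where
  "noetherian_ring A \<longleftrightarrow> (\<forall>I. ring_ideal A I \<longrightarrow> fin_generated_ideal A I)"

definition prime_ideal_of :: "'k::field set \<Rightarrow> 'k set \<Rightarrow> bool" where
  "prime_ideal_of A P \<longleftrightarrow> ring_ideal A P \<and> P \<noteq> A \<and>
     (\<forall>a\<in>A. \<forall>b\<in>A. a * b \<in> P \<longrightarrow> a \<in> P \<or> b \<in> P)"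

definition maximal_ideal_of :: "'k::field set \<Rightarrow> 'k set \<Rightarrow> bool" where
  "maximal_ideal_of A M \<longleftrightarrow> ring_ideal A M \<and> M \<noteq> A \<and>
     (\<forall>J. ring_ideal A J \<and> M \<subseteq> J \<longrightarrow> J = M \<or> J = A)"

definition integral_over :: "'k::field set \<Rightarrow> 'k \<Rightarrow> bool" where
  "integral_over A x \<longleftrightarrow> (\<exists>(n::nat) c. (\<forall>i<n. c i \<in> A) \<and> x ^ n + (\<Sum>i<n. c i * x ^ i) = 0)"

definition integrally_closed :: "'k::field set \<Rightarrow> bool" where
  "integrally_closed A \<longleftrightarrow> (\<forall>x. integral_over A x \<longrightarrow> x \<in> A)"

definition dedekind_domain :: "'k::field set \<Rightarrow> bool" where
  "dedekind_domain A \<longleftrightarrow> is_fraction_field_of A \<and> noetherian_ring A \<and> integrally_closed A \<and>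
     (\<forall>P. prime_ideal_of A P \<and> P \<noteq> {0} \<longrightarrow> maximal_ideal_of A P)"

definition fractional_ideal :: "'k::field set \<Rightarrow> 'k set \<Rightarrow> bool" where
  "fractional_ideal A I \<longleftrightarrow> I \<noteq> {0} \<and> 0 \<in> I \<and> (\<forall>x\<in>I. \<forall>y\<in>I. x + y \<in> I) \<and>
     (\<forall>a\<in>A. \<forall>x\<in>I. a * x \<in> I) \<and> (\<exists>d\<in>A. d \<noteq> 0 \<and> (\<forall>x\<in>I. d * x \<in> A))"

definition submod_mult :: "'k::field set \<Rightarrow> 'k set \<Rightarrow> 'k set" where
  "submod_mult I J = {x. \<exists>(n::nat) f g. (\<forall>i<n. f i \<in> I \<and> g i \<in> J) \<and> x = (\<Sum>i<n. f i * g i)}"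

fun submod_pow :: "'k::field set \<Rightarrow> 'k set \<Rightarrow> nat \<Rightarrow> 'k set" where
  "submod_pow A I 0 = A"
| "submod_pow A I (Suc n) = submod_mult I (submod_pow A I n)"

definition principal_frac :: "'k::field set \<Rightarrow> 'k set \<Rightarrow> bool" where
  "principal_frac A I \<longleftrightarrow> (\<exists>x. x \<noteq> 0 \<and> I = {x * a | a. a \<in> A})"

text \<open>For a Dedekind domain the divisor class group is the group of nonzero fractional
  ideals modulo principal ones; it is torsion iff every class has finite order.\<close>
definition torsion_class_group :: "'k::field set \<Rightarrow> bool" where
  "torsion_class_group A \<longleftrightarrow>
     (\<forall>I. fractional_ideal A I \<longrightarrow> (\<exists>n>0. principal_frac A (submod_pow A I n)))"

definition overring :: "'k::field set \<Rightarrow> 'k set \<Rightarrow> bool" where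
  "overring A B \<longleftrightarrow> subring B \<and> A \<subseteq> B"

definition mult_closed_nonzero :: "'k::field set \<Rightarrow> 'k set \<Rightarrow> bool" where
  "mult_closed_nonzero A S \<longleftrightarrow> S \<subseteq> A - {0} \<and> 1 \<in> S \<and> (\<forall>s\<in>S. \<forall>t\<in>S. s * t \<in> S)"

definition localization_of :: "'k::field set \<Rightarrow> 'k set \<Rightarrow> bool" where
  "localization_of A B \<longleftrightarrow> (\<exists>S. mult_closed_nonzero A S \<and> B = {a / s | a s. a \<in> A \<and> s \<in> S})"

definition well_centered :: "'k::field set \<Rightarrow> 'k set \<Rightarrow> bool" where
  "well_centered A B \<longleftrightarrow> (\<forall>b\<in>B. \<exists>u\<in>units_of_ring B. u * b \<in> A)"

definition adjoin :: "'k::field set \<Rightarrow> 'k \<Rightarrow> 'k set" where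
  "adjoin A b = {x. \<exists>(n::nat) c. (\<forall>i<n. c i \<in> A) \<and> x = (\<Sum>i<n. c i * b ^ i)}"

end

theory Submission
  imports Defs
begin


definition amod :: "'k::field set \<Rightarrow> 'k set \<Rightarrow> bool" where
  "amod A M \<longleftrightarrow> 0 \<in> M \<and> (\<forall>x\<in>M. \<forall>y\<in>M. x + y \<in> M) \<and> (\<forall>a\<in>A. \<forall>x\<in>M. a * x \<in> M)"

definition pA :: "'k::field set \<Rightarrow> 'k \<Rightarrow> 'k set" where
  "pA A x = {x * a | a. a \<in> A}"

definition finv :: "'k::field set \<Rightarrow> 'k set \<Rightarrow> 'k set" where
  "finv A I = {x. \<forall>i\<in>I. x * i \<in> A}"

lemma sub_simps:
  assumes "subring A"
  shows "0 \<in> A" "1 \<in> A" "x \<in> A \<Longrightarrow> y \<in> A \<Longrightarrow> x + y \<in> A"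
    "x \<in> A \<Longrightarrow> y \<in> A \<Longrightarrow> x - y \<in> A" "x \<in> A \<Longrightarrow> y \<in> A \<Longrightarrow> x * y \<in> A"
    "x \<in> A \<Longrightarrow> - x \<in> A"
  using assms unfolding subring_def by auto

lemma ideal_amod: "ring_ideal A I \<longleftrightarrow> amod A I \<and> I \<subseteq> A"
  unfolding ring_ideal_def amod_def by auto

lemma mul_least:
  assumes "0 \<in> M" "\<And>x y. x\<in>M \<Longrightarrow> y\<in>M \<Longrightarrow> x+y\<in>M" "\<And>i j. i\<in>I \<Longrightarrow> j\<in>J \<Longrightarrow> i*j\<in>M"
  shows "submod_mult I J \<subseteq> M"
proof
  fix x assume "x \<in> submod_mult I J"
  then obtain n :: nat and f g where fg: "\<forall>i<n. f i \<in> I \<and> g i \<in> J" and x: "x = (\<Sum>i<n. f i * g i)"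
    unfolding submod_mult_def mem_Collect_eq by blast
  have "\<forall>m\<le>n. (\<Sum>i<m. f i * g i) \<in> M"
  proof (intro allI impI)
    fix m assume "m \<le> n" then show "(\<Sum>i<m. f i * g i) \<in> M"
      by (induction m) (auto simp: assms fg)
  qed
  then show "x \<in> M" using x by auto
qed

lemma mul_in: "i \<in> I \<Longrightarrow> j \<in> J \<Longrightarrow> i * j \<in> submod_mult I J"
  unfolding submod_mult_def
  by (rule CollectI, rule exI[of _ 1], rule exI[of _ "\<lambda>_. i"], rule exI[of _ "\<lambda>_. j"]) auto

lemma mul_zero: "0 \<in> submod_mult I J"
  unfolding submod_mult_def by (rule CollectI, rule exI[of _ 0]) auto

lemma mul_add_one:
  assumes "x \<in> submod_mult I J" "i \<in> I" "j \<in> J"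
  shows "x + i * j \<in> submod_mult I J"
proof -
  obtain n :: nat and f g where fg: "\<forall>k<n. f k \<in> I \<and> g k \<in> J" and x: "x = (\<Sum>k<n. f k * g k)"
    using assms(1) unfolding submod_mult_def mem_Collect_eq by blast
  have "(\<Sum>k<Suc n. (f(n:=i)) k * (g(n:=j)) k) = x + i * j"
    using x by simp
  moreover have "\<forall>k<Suc n. (f(n:=i)) k \<in> I \<and> (g(n:=j)) k \<in> J" using fg assms by auto
  ultimately show ?thesis unfolding submod_mult_def mem_Collect_eq
    by (intro exI[of _ "Suc n"] exI[of _ "f(n:=i)"] exI[of _ "g(n:=j)"] conjI) simp_all
qed

lemma mul_add:
  assumes "x \<in> submod_mult I J" "y \<in> submod_mult I J"
  shows "x + y \<in> submod_mult I J"
proof -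
  obtain n :: nat and f g where fg: "\<forall>k<n. f k \<in> I \<and> g k \<in> J" and y: "y = (\<Sum>k<n. f k * g k)"
    using assms(2) unfolding submod_mult_def mem_Collect_eq by blast
  have "\<forall>m\<le>n. x + (\<Sum>k<m. f k * g k) \<in> submod_mult I J"
  proof (intro allI impI)
    fix m assume "m \<le> n" then show "x + (\<Sum>k<m. f k * g k) \<in> submod_mult I J"
    proof (induction m)
      case 0 then show ?case using assms(1) by simp
    next
      case (Suc m)
      then have "x + (\<Sum>k<m. f k * g k) + f m * g m \<in> submod_mult I J"
        using fg by (intro mul_add_one) auto
      then show ?case by (simp add: add.assoc)
    qed
  qed
  then show ?thesis using y by auto
qed

lemma mul_comm: "submod_mult I J = submod_mult J I"
proof -
  have *: "submod_mult X Y \<subseteq> submod_mult Y X" for X Y :: "'a::field set"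
    proof (rule mul_least)
    fix i j assume "i \<in> X" "j \<in> Y"
    then show "i * j \<in> submod_mult Y X" using mul_in[of j Y i X] by (simp add: mult.commute)
  qed (auto simp: mul_zero mul_add)
  show ?thesis using *[of I J] *[of J I] by auto
qed

lemma mul_assoc1: "submod_mult (submod_mult I J) L \<subseteq> submod_mult I (submod_mult J L)"
proof -
  let ?R = "submod_mult I (submod_mult J L)"
  have "submod_mult I J \<subseteq> {x. \<forall>l\<in>L. x * l \<in> ?R}"
    by (rule mul_least) (auto simp: mul_zero distrib_right mul_add mult.assoc intro!: mul_in)
  then show ?thesis
    by (intro mul_least) (auto simp: mul_zero mul_add)
qed

lemma mul_assoc: "submod_mult (submod_mult I J) L = submod_mult I (submod_mult J L)"
proof
  show "submod_mult (submod_mult I J) L \<subseteq> submod_mult I (submod_mult J L)" by (rule mul_assoc1)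
  have "submod_mult I (submod_mult J L) = submod_mult (submod_mult L J) I"
    using mul_comm[of I "submod_mult J L"] mul_comm[of J L] by simp
  also have "\<dots> \<subseteq> submod_mult L (submod_mult J I)" by (rule mul_assoc1)
  also have "\<dots> = submod_mult (submod_mult I J) L"
    using mul_comm[of L "submod_mult J I"] mul_comm[of J I] by simp
  finally show "submod_mult I (submod_mult J L) \<subseteq> submod_mult (submod_mult I J) L" .
qed

lemma mul_mono: "I \<subseteq> I' \<Longrightarrow> J \<subseteq> J' \<Longrightarrow> submod_mult I J \<subseteq> submod_mult I' J'"
  by (rule mul_least) (rule mul_zero, erule (1) mul_add, rule mul_in, auto)

lemma mul_amod: "amod A I \<Longrightarrow> amod A (submod_mult I J)"
proof -
  assume I: "amod A I"
  have "\<forall>a\<in>A. submod_mult I J \<subseteq> {x. a * x \<in> submod_mult I J}"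
  proof
    fix a assume a: "a \<in> A"
    show "submod_mult I J \<subseteq> {x. a * x \<in> submod_mult I J}"
      by (rule mul_least) (use I a in \<open>auto simp: mul_zero distrib_left mul_add amod_def
          mult.assoc[symmetric] intro!: mul_in\<close>)
  qed
  then show ?thesis unfolding amod_def by (auto simp: mul_zero mul_add)
qed

lemma mul_amod2: "amod A J \<Longrightarrow> amod A (submod_mult I J)"
  by (subst mul_comm) (rule mul_amod)

lemma mul_A:
  assumes "subring A" "amod A I"
  shows "submod_mult A I = I"
proof
  show "submod_mult A I \<subseteq> I" by (rule mul_least) (use assms(2) in \<open>auto simp: amod_def\<close>)
  show "I \<subseteq> submod_mult A I"
  proof
    fix i assume "i \<in> I"
    then have "1 * i \<in> submod_mult A I" using sub_simps(2)[OF assms(1)] by (intro mul_in)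
    then show "i \<in> submod_mult A I" by simp
  qed
qed

lemma mul_A2: "subring A \<Longrightarrow> amod A I \<Longrightarrow> submod_mult I A = I"
  by (subst mul_comm) (rule mul_A)

lemma amod_A: "subring A \<Longrightarrow> amod A A"
  unfolding amod_def by (auto simp: sub_simps)

lemma mul_pA:
  assumes "subring A" "amod A I"
  shows "submod_mult (pA A x) I = (\<lambda>y. x * y) ` I"
proof
  show "submod_mult (pA A x) I \<subseteq> (\<lambda>y. x * y) ` I"
  proof (rule mul_least)
    show "0 \<in> (*) x ` I" using assms(2) unfolding amod_def by (metis image_eqI mult_zero_right)
    show "u + v \<in> (*) x ` I" if "u \<in> (*) x ` I" "v \<in> (*) x ` I" for u v
      using that assms(2) unfolding amod_def by (auto simp: distrib_left[symmetric])
    show "i * j \<in> (*) x ` I" if "i \<in> pA A x" "j \<in> I" for i j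
      using that assms(2) unfolding amod_def pA_def by (auto simp: mult.assoc)
  qed
  show "(\<lambda>y. x * y) ` I \<subseteq> submod_mult (pA A x) I"
  proof
    fix z assume "z \<in> (\<lambda>y. x * y) ` I"
    then obtain i where i: "i \<in> I" "z = x * i" by auto
    have "x * 1 \<in> pA A x" unfolding pA_def using sub_simps(2)[OF assms(1)] by blast
    then have "(x * 1) * i \<in> submod_mult (pA A x) I" using i by (intro mul_in)
    then show "z \<in> submod_mult (pA A x) I" using i by simp
  qed
qed

lemma pA_amod: "subring A \<Longrightarrow> amod A (pA A x)"
  unfolding amod_def pA_def
proof (intro conjI ballI)
  assume A: "subring A"
  show "0 \<in> {x * a |a. a \<in> A}" using sub_simps(1)[OF A] by (intro CollectI exI[of _ 0]) simp
  fix u v assume "u \<in> {x * a |a. a \<in> A}" "v \<in> {x * a |a. a \<in> A}"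
  then obtain a b where "a \<in> A" "b \<in> A" "u = x * a" "v = x * b" by blast
  then show "u + v \<in> {x * a |a. a \<in> A}" using sub_simps(3)[OF A]
    by (intro CollectI exI[of _ "a + b"]) (simp add: distrib_left)
next
  assume A: "subring A"
  fix c u assume "c \<in> A" "u \<in> {x * a |a. a \<in> A}"
  then obtain a where "a \<in> A" "u = x * a" by blast
  then show "c * u \<in> {x * a |a. a \<in> A}" using sub_simps(5)[OF A \<open>c \<in> A\<close>]
    by (intro CollectI exI[of _ "c * a"]) (simp add: mult.left_commute)
qed

lemma pA_mult: "subring A \<Longrightarrow> submod_mult (pA A x) (pA A y) = pA A (x * y)"
  by (simp add: mul_pA pA_amod) (auto simp: pA_def mult.assoc)

lemma pA_1: "pA A 1 = A"
  unfolding pA_def by auto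



lemma pow_amod: "subring A \<Longrightarrow> amod A I \<Longrightarrow> amod A (submod_pow A I n)"
  by (induction n) (auto simp: amod_A mul_amod)

lemma pow_add: "subring A \<Longrightarrow> amod A I \<Longrightarrow>
   submod_pow A I (m + n) = submod_mult (submod_pow A I m) (submod_pow A I n)"
  by (induction m) (simp_all add: mul_A pow_amod mul_assoc)

lemma pow_mult: "subring A \<Longrightarrow> amod A I \<Longrightarrow>
   submod_pow A I (m * k) = submod_pow A (submod_pow A I m) k"
  by (induction k) (simp_all add: pow_add)

lemma mul_swap: "submod_mult (submod_mult a b) (submod_mult c d) = submod_mult (submod_mult a c) (submod_mult b d)"
proof -
  have "submod_mult (submod_mult a b) (submod_mult c d) = submod_mult a (submod_mult b (submod_mult c d))"
    by (rule mul_assoc)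
  also have "submod_mult b (submod_mult c d) = submod_mult c (submod_mult b d)"
    using mul_assoc[of b c d] mul_assoc[of c b d] mul_comm[of b c] by simp
  also have "submod_mult a (submod_mult c (submod_mult b d)) = submod_mult (submod_mult a c) (submod_mult b d)"
    by (rule mul_assoc[symmetric])
  finally show ?thesis .
qed

lemma pow_mul_distrib: "subring A \<Longrightarrow> amod A X \<Longrightarrow> amod A Y \<Longrightarrow>
  submod_pow A (submod_mult X Y) n = submod_mult (submod_pow A X n) (submod_pow A Y n)"
  by (induction n) (simp_all add: mul_A amod_A mul_swap)

lemma pow_pA: "subring A \<Longrightarrow> submod_pow A (pA A x) n = pA A (x ^ n)"
  by (induction n) (simp_all add: pA_1 pA_mult)

lemma pow_A: "subring A \<Longrightarrow> submod_pow A A n = A"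
  by (induction n) (simp_all add: mul_A amod_A)

lemma mul_subA: "subring A \<Longrightarrow> amod A I \<Longrightarrow> X \<subseteq> A \<Longrightarrow> submod_mult I X \<subseteq> I"
  using mul_mono[of I I X A] mul_A2[of A I] by auto

lemma pow_sub: "subring A \<Longrightarrow> amod A I \<Longrightarrow> I \<subseteq> A \<Longrightarrow> submod_pow A I n \<subseteq> A"
proof (induction n)
  case (Suc n)
  then show ?case using mul_subA[of A I "submod_pow A I n"] by auto
qed simp

lemma pow_sub1: "subring A \<Longrightarrow> amod A I \<Longrightarrow> I \<subseteq> A \<Longrightarrow> n > 0 \<Longrightarrow> submod_pow A I n \<subseteq> I"
  using pow_sub[of A I "n - 1"] mul_subA[of A I "submod_pow A I (n-1)"]
  by (cases n) auto

lemma sum_in: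
  assumes "0 \<in> M" "\<And>x y. x\<in>M \<Longrightarrow> y\<in>M \<Longrightarrow> x+y\<in>M" "\<And>f. f \<in> F \<Longrightarrow> g f \<in> M"
  shows "sum g F \<in> M"
proof (cases "finite F")
  case True
  then show ?thesis using assms(3)
    by (induction F rule: finite_induct) (auto simp: assms(1,2))
qed (simp add: assms(1))

lemma finv_amod: "subring A \<Longrightarrow> amod A (finv A I)"
  unfolding amod_def finv_def by (auto simp: sub_simps distrib_right mult.assoc)

lemma ideal_mul: "ring_ideal A I \<Longrightarrow> subring A \<Longrightarrow> J \<subseteq> A \<Longrightarrow> ring_ideal A (submod_mult I J)"
  unfolding ideal_amod using mul_amod mul_subA by blast



locale dd =
  fixes A :: "'k::field set"
  assumes ded: "dedekind_domain A"
begin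

lemma sub: "subring A" and noeth: "noetherian_ring A" and icl: "integrally_closed A"
  and dim1: "\<And>P. prime_ideal_of A P \<Longrightarrow> P \<noteq> {0} \<Longrightarrow> maximal_ideal_of A P"
  and fracf: "\<And>x. \<exists>a\<in>A. \<exists>s\<in>A. s \<noteq> 0 \<and> x = a / s"
  using ded unfolding dedekind_domain_def is_fraction_field_of_def by auto

lemmas S = sub_simps[OF sub]

lemma noeth_max:
  assumes "F \<noteq> {}" "\<forall>I\<in>F. ring_ideal A I"
  shows "\<exists>M\<in>F. \<forall>X\<in>F. M \<subseteq> X \<longrightarrow> X = M"
proof (rule subset_Zorn)
  fix C assume ch: "subset.chain F C"
  show "\<exists>U\<in>F. \<forall>X\<in>C. X \<subseteq> U"
  proof (cases "C = {}")
    case True then show ?thesis using assms(1) by auto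
  next
    case False
    have CF: "C \<subseteq> F" and lin: "\<forall>X\<in>C. \<forall>Y\<in>C. X \<subseteq> Y \<or> Y \<subseteq> X"
      using ch by (auto simp: subset_chain_def)
    have idC: "\<forall>X\<in>C. ring_ideal A X" using CF assms(2) by auto
    have "ring_ideal A (\<Union>C)"
      unfolding ring_ideal_def
    proof (intro conjI ballI)
      show "\<Union>C \<subseteq> A" using idC unfolding ring_ideal_def by auto
      show "0 \<in> \<Union>C" using idC False unfolding ring_ideal_def by auto
      fix x y assume "x \<in> \<Union>C" "y \<in> \<Union>C"
      then obtain X Y where "X \<in> C" "Y \<in> C" "x \<in> X" "y \<in> Y" by auto
      then show "x + y \<in> \<Union>C"
      proof (cases "X \<subseteq> Y")
        case True
        then have "x + y \<in> Y" using idC \<open>Y \<in> C\<close> \<open>x \<in> X\<close> \<open>y \<in> Y\<close> unfolding ring_ideal_def by blast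
        then show ?thesis using \<open>Y \<in> C\<close> by blast
      next
        case False
        then have "Y \<subseteq> X" using lin \<open>X \<in> C\<close> \<open>Y \<in> C\<close> by blast
        then have "x + y \<in> X" using idC \<open>X \<in> C\<close> \<open>x \<in> X\<close> \<open>y \<in> Y\<close> unfolding ring_ideal_def by blast
        then show ?thesis using \<open>X \<in> C\<close> by blast
      qed
    next
      fix a x assume "a \<in> A" "x \<in> \<Union>C"
      then obtain X where "X \<in> C" "x \<in> X" by auto
      then have "a * x \<in> X" using idC \<open>a \<in> A\<close> unfolding ring_ideal_def by blast
      then show "a * x \<in> \<Union>C" using \<open>X \<in> C\<close> by blast
    qed
    then have "fin_generated_ideal A (\<Union>C)" using noeth unfolding noetherian_ring_def by blast
    then obtain G where G0: "finite G \<and> G \<subseteq> \<Union>C \<and>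
      \<Union>C = {x. \<exists>c. (\<forall>f\<in>G. c f \<in> A) \<and> x = (\<Sum>f\<in>G. c f * f)}"
      unfolding fin_generated_ideal_def by (rule exE)
    have G: "finite G" "G \<subseteq> \<Union>C"
      "\<Union>C = {x. \<exists>c. (\<forall>f\<in>G. c f \<in> A) \<and> x = (\<Sum>f\<in>G. c f * f)}"
      using G0 by blast+
    obtain U where U: "U \<in> C" "G \<subseteq> U"
      by (rule finite_subset_Union_chain[OF G(1) G(2) False ch])
    have idU: "ring_ideal A U" using U idC by auto
    have "\<Union>C \<subseteq> U"
    proof
      fix x assume "x \<in> \<Union>C"
      then obtain c where c: "\<forall>f\<in>G. c f \<in> A" "x = (\<Sum>f\<in>G. c f * f)" using G(3) by auto
      show "x \<in> U" unfolding c(2)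
        by (rule sum_in) (use idU c(1) U(2) in \<open>auto simp: ring_ideal_def\<close>)
    qed
    then have "\<forall>X\<in>C. X \<subseteq> U" by blast
    moreover have "U \<in> F" using U(1) CF by blast
    ultimately show ?thesis by blast
  qed
qed

lemma noeth_induct:
  assumes "ring_ideal A I"
    and step: "\<And>I. ring_ideal A I \<Longrightarrow> (\<And>J. ring_ideal A J \<Longrightarrow> I \<subset> J \<Longrightarrow> P J) \<Longrightarrow> P I"
  shows "P I"
proof (rule ccontr)
  assume "\<not> P I"
  define F where "F = {I. ring_ideal A I \<and> \<not> P I}"
  have "F \<noteq> {}" using assms(1) \<open>\<not> P I\<close> unfolding F_def by blast
  moreover have "\<forall>I\<in>F. ring_ideal A I" unfolding F_def by blast
  ultimately have "\<exists>M\<in>F. \<forall>X\<in>F. M \<subseteq> X \<longrightarrow> X = M" by (rule noeth_max)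
  then obtain M where "M \<in> F" and mx: "\<forall>X\<in>F. M \<subseteq> X \<longrightarrow> X = M" by (rule bexE)
  then have M: "ring_ideal A M" "\<not> P M" unfolding F_def by auto
  have "P M"
  proof (rule step[OF M(1)])
    fix J assume "ring_ideal A J" "M \<subset> J"
    then show "P J" using mx unfolding F_def by blast
  qed
  then show False using M by auto
qed

lemma A_ideal: "ring_ideal A A"
  unfolding ring_ideal_def by (auto simp: S)

lemma max_exists:
  assumes "ring_ideal A I" "I \<noteq> A"
  shows "\<exists>M. maximal_ideal_of A M \<and> I \<subseteq> M"
proof -
  let ?F = "{J. ring_ideal A J \<and> I \<subseteq> J \<and> J \<noteq> A}"
  have "?F \<noteq> {}" using assms by blast
  moreover have "\<forall>J\<in>?F. ring_ideal A J" by blast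
  ultimately have "\<exists>M\<in>?F. \<forall>X\<in>?F. M \<subseteq> X \<longrightarrow> X = M" by (rule noeth_max)
  then obtain M where M: "M \<in> ?F" "\<forall>X\<in>?F. M \<subseteq> X \<longrightarrow> X = M" by (rule bexE)
  have "maximal_ideal_of A M"
    unfolding maximal_ideal_of_def using M by auto
  then show ?thesis using M by auto
qed

definition adj :: "'k set \<Rightarrow> 'k \<Rightarrow> 'k set" where
  "adj I a = {i + a * r | i r. i \<in> I \<and> r \<in> A}"

lemma adj_props:
  assumes I: "ring_ideal A I" and a: "a \<in> A"
  shows "ring_ideal A (adj I a)" "I \<subseteq> adj I a" "a \<in> adj I a"
proof -
  show "ring_ideal A (adj I a)"
    unfolding ring_ideal_def adj_def
  proof (intro conjI ballI)
    show "{i + a * r |i r. i \<in> I \<and> r \<in> A} \<subseteq> A"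
      using I a unfolding ring_ideal_def by (auto simp: S)
    show "0 \<in> {i + a * r |i r. i \<in> I \<and> r \<in> A}"
      using I S(1) unfolding ring_ideal_def by (intro CollectI exI[of _ 0]) auto
    fix x y assume "x \<in> {i + a * r |i r. i \<in> I \<and> r \<in> A}" "y \<in> {i + a * r |i r. i \<in> I \<and> r \<in> A}"
    then obtain i r i' r' where "i \<in> I" "r \<in> A" "i' \<in> I" "r' \<in> A" "x = i + a * r" "y = i' + a * r'"
      by blast
    then show "x + y \<in> {i + a * r |i r. i \<in> I \<and> r \<in> A}"
      using I unfolding ring_ideal_def
      by (intro CollectI exI[of _ "i + i'"] exI[of _ "r + r'"]) (auto simp: S algebra_simps)
  next
    fix c x assume "c \<in> A" "x \<in> {i + a * r |i r. i \<in> I \<and> r \<in> A}"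
    then obtain i r where "i \<in> I" "r \<in> A" "x = i + a * r" by blast
    then show "c * x \<in> {i + a * r |i r. i \<in> I \<and> r \<in> A}"
      using I \<open>c \<in> A\<close> unfolding ring_ideal_def
      by (intro CollectI exI[of _ "c * i"] exI[of _ "c * r"]) (auto simp: S algebra_simps)
  qed
  show "I \<subseteq> adj I a"
    unfolding adj_def using S(1) by force
  show "a \<in> adj I a"
    unfolding adj_def using S(2) I unfolding ring_ideal_def by force
qed

lemma maximal_prime:
  assumes M: "maximal_ideal_of A M"
  shows "prime_ideal_of A M"
  unfolding prime_ideal_of_def
proof (intro conjI ballI impI)
  have I: "ring_ideal A M" "M \<noteq> A" using M unfolding maximal_ideal_of_def by auto
  then show "ring_ideal A M" "M \<noteq> A" by auto
  fix a b assume ab: "a \<in> A" "b \<in> A" "a * b \<in> M"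
  show "a \<in> M \<or> b \<in> M"
  proof (cases "a \<in> M")
    case False
    then have "a \<notin> M" .
    then have "adj M a = A" using M adj_props[OF I(1) ab(1)] unfolding maximal_ideal_of_def by blast
    then have "1 \<in> adj M a" using S(2) by simp
    then obtain i r where ir: "i \<in> M" "r \<in> A" "1 = i + a * r" unfolding adj_def by blast
    have "b = b * (i + a * r)" using ir(3) by simp
    then have beq: "b = b * i + (a * b) * r" by (simp add: algebra_simps)
    have "b * i \<in> M" "(a * b) * r \<in> M" using I(1) ir ab unfolding ring_ideal_def
      by (auto simp: mult.commute)
    then have "b * i + (a * b) * r \<in> M" using I(1) unfolding ring_ideal_def by blast
    then show ?thesis using beq by simp
  qed simp
qed

lemma prime_mul:
  assumes P: "prime_ideal_of A P" and I: "I \<subseteq> A" and J: "J \<subseteq> A"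
    and IJ: "submod_mult I J \<subseteq> P"
  shows "I \<subseteq> P \<or> J \<subseteq> P"
proof (rule disjCI)
  assume "\<not> J \<subseteq> P"
  then obtain j where j: "j \<in> J" "j \<notin> P" by auto
  show "I \<subseteq> P"
  proof
    fix i assume "i \<in> I"
    then have "i * j \<in> P" using IJ j mul_in by blast
    then show "i \<in> P" using P j \<open>i \<in> I\<close> I J unfolding prime_ideal_of_def by auto
  qed
qed

end


fun hpoly :: "'k::field set \<Rightarrow> 'k \<Rightarrow> nat \<Rightarrow> 'k set" where
  "hpoly A x 0 = {0}"
| "hpoly A x (Suc n) = {a + x * y | a y. a \<in> A \<and> y \<in> hpoly A x n}"

lemma hp_SucI: "a \<in> A \<Longrightarrow> y \<in> hpoly A x n \<Longrightarrow> a + x * y \<in> hpoly A x (Suc n)"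
  by auto

lemma hp_SucE: "y \<in> hpoly A x (Suc n) \<Longrightarrow> \<exists>a y'. a \<in> A \<and> y' \<in> hpoly A x n \<and> y = a + x * y'"
  by auto

declare hpoly.simps(2)[simp del]

context dd begin

lemma hp_zero: "0 \<in> hpoly A x n"
proof (induction n)
  case (Suc n) then show ?case using hp_SucI[OF S(1) Suc] by simp
qed simp

lemma hp_mono1: "hpoly A x n \<subseteq> hpoly A x (Suc n)"
proof (induction n)
  case 0 then show ?case using hp_SucI[OF S(1), of 0 x 0] by simp
next
  case (Suc n) then show ?case by (blast dest: hp_SucE intro: hp_SucI)
qed

lemma hp_mono: "m \<le> n \<Longrightarrow> hpoly A x m \<subseteq> hpoly A x n"
  using lift_Suc_mono_le[of "hpoly A x", OF hp_mono1] by blast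

lemma hp_add: "y \<in> hpoly A x n \<Longrightarrow> z \<in> hpoly A x n \<Longrightarrow> y + z \<in> hpoly A x n"
proof (induction n arbitrary: y z)
  case (Suc n)
  then obtain a y' b z' where "a \<in> A" "y' \<in> hpoly A x n" "y = a + x * y'"
    "b \<in> A" "z' \<in> hpoly A x n" "z = b + x * z'" using hp_SucE by metis
  then show ?case using Suc.IH[of y' z'] S(3)[of a b] hp_SucI[of "a + b" A "y' + z'" x n]
    by (simp add: algebra_simps)
qed simp

lemma hp_amult: "c \<in> A \<Longrightarrow> y \<in> hpoly A x n \<Longrightarrow> c * y \<in> hpoly A x n"
proof (induction n arbitrary: y)
  case (Suc n)
  then obtain a y' where "a \<in> A" "y' \<in> hpoly A x n" "y = a + x * y'" using hp_SucE by metis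
  then show ?case using Suc.IH[of y'] S(5)[of c a] Suc.prems hp_SucI[of "c * a" A "c * y'" x n]
    by (simp add: algebra_simps)
qed simp

lemma hp_shift: "y \<in> hpoly A x n \<Longrightarrow> x * y \<in> hpoly A x (Suc n)"
  using hp_SucI[OF S(1)] by fastforce

lemma hp_const: "a \<in> A \<Longrightarrow> a \<in> hpoly A x (Suc n)"
  using hp_zero[of x n] hp_SucI[of a A 0 x n] by simp

lemma hp_mult: "y \<in> hpoly A x n \<Longrightarrow> z \<in> hpoly A x m \<Longrightarrow> y * z \<in> hpoly A x (n + m)"
proof (induction n arbitrary: y)
  case 0 then show ?case using hp_zero by simp
next
  case (Suc n)
  then obtain a y' where a: "a \<in> A" "y' \<in> hpoly A x n" "y = a + x * y'" using hp_SucE by metis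
  have "y * z = a * z + x * (y' * z)" using a(3) by (simp add: algebra_simps)
  moreover have "a * z \<in> hpoly A x (Suc n + m)"
    using hp_amult[OF a(1) Suc.prems(2)] hp_mono[of m "Suc n + m"] by auto
  moreover have "x * (y' * z) \<in> hpoly A x (Suc n + m)"
    using hp_shift[OF Suc.IH[OF a(2) Suc.prems(2)]] by simp
  ultimately show ?case using hp_add[of "a * z" x "Suc n + m" "x * (y' * z)"] by simp
qed

lemma hp_pow: "x ^ k \<in> hpoly A x (Suc k)"
proof (induction k)
  case 0 then show ?case using hp_const[OF S(2)] by simp
next
  case (Suc k) then show ?case using hp_shift by simp
qed

lemma hp_sum1: "(\<forall>i<n. c i \<in> A) \<Longrightarrow> (\<Sum>i<n. c i * x ^ i) \<in> hpoly A x n"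
proof (induction n arbitrary: c)
  case 0 then show ?case by simp
next
  case (Suc n)
  have eq: "(\<Sum>i<Suc n. c i * x ^ i) = c 0 + x * (\<Sum>i<n. c (Suc i) * x ^ i)"
    by (simp add: sum.lessThan_Suc_shift sum_distrib_left algebra_simps del: sum.lessThan_Suc)
  have m1: "(\<Sum>i<n. c (Suc i) * x ^ i) \<in> hpoly A x n" using Suc by auto
  have m2: "c 0 \<in> A" using Suc by auto
  show ?case unfolding eq by (rule hp_SucI[OF m2 m1])
qed

lemma hp_sum2: "y \<in> hpoly A x n \<Longrightarrow> \<exists>c. (\<forall>i<n. c i \<in> A) \<and> y = (\<Sum>i<n. c i * x ^ i)"
proof (induction n arbitrary: y)
  case 0 then show ?case by simp
next
  case (Suc n)
  then obtain a y' where a: "a \<in> A" "y' \<in> hpoly A x n" "y = a + x * y'" using hp_SucE by metis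
  obtain c where c: "\<forall>i<n. c i \<in> A" "y' = (\<Sum>i<n. c i * x ^ i)" using Suc.IH[OF a(2)] by blast
  have "(\<Sum>i<Suc n. (case_nat a c) i * x ^ i) = a + x * (\<Sum>i<n. c i * x ^ i)"
    by (simp add: sum.lessThan_Suc_shift sum_distrib_left algebra_simps del: sum.lessThan_Suc)
  moreover have "\<forall>i<Suc n. (case_nat a c) i \<in> A" using c(1) a(1) by (auto split: nat.split)
  ultimately show ?case using a(3) c(2) by metis
qed

lemma adjoin_hp: "y \<in> adjoin A x \<longleftrightarrow> (\<exists>n. y \<in> hpoly A x n)"
  unfolding adjoin_def using hp_sum1 hp_sum2 by blast

lemma bound_hp:
  assumes "finite G" "\<forall>f\<in>G. \<exists>n. h f \<in> hpoly A x n"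
  shows "\<exists>N. \<forall>f\<in>G. h f \<in> hpoly A x N"
proof -
  obtain g where g: "\<forall>f\<in>G. h f \<in> hpoly A x (g f)" using assms(2) by metis
  have "\<forall>f\<in>G. h f \<in> hpoly A x (sum g G)"
  proof
    fix f assume "f \<in> G"
    then have "g f \<le> sum g G" using assms(1) by (intro member_le_sum) auto
    then show "h f \<in> hpoly A x (sum g G)" using g \<open>f \<in> G\<close> hp_mono by blast
  qed
  then show ?thesis by blast
qed

lemma cic:
  assumes c: "c \<noteq> 0" and cx: "\<forall>n. c * x ^ n \<in> A"
  shows "x \<in> A"
proof -
  have a: "\<forall>k. c * x ^ k * y \<in> A" if "y \<in> hpoly A x n" for y n
    using that
  proof (induction n arbitrary: y)
    case 0 then show ?case using S(1) by simp
  next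
    case (Suc n)
    then obtain a y' where a: "a \<in> A" "y' \<in> hpoly A x n" "y = a + x * y'" using hp_SucE by metis
    show ?case
    proof
      fix k
      have "c * x ^ k * y = a * (c * x ^ k) + c * x ^ Suc k * y'" using a(3) by (simp add: algebra_simps)
      moreover have "a * (c * x ^ k) \<in> A" using a(1) cx S(5) by blast
      moreover have "c * x ^ Suc k * y' \<in> A" using Suc.IH[OF a(2)] by blast
      ultimately show "c * x ^ k * y \<in> A" using S(3) by simp
    qed
  qed
  define L where "L = {c * y | y. \<exists>n. y \<in> hpoly A x n}"
  have "ring_ideal A L"
    unfolding ring_ideal_def
  proof (intro conjI ballI)
    show "L \<subseteq> A"
    proof
      fix u assume "u \<in> L"
      then obtain y n where "u = c * y" "y \<in> hpoly A x n" unfolding L_def by blast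
      then have "c * x ^ 0 * y \<in> A" using a[of y n] by blast
      then show "u \<in> A" using \<open>u = c * y\<close> by simp
    qed
    show "0 \<in> L" unfolding L_def using hp_zero by (auto intro!: exI[of _ 0])
    fix u v assume "u \<in> L" "v \<in> L"
    then obtain y n z m where "u = c * y" "y \<in> hpoly A x n" "v = c * z" "z \<in> hpoly A x m"
      unfolding L_def by blast
    then have "y \<in> hpoly A x (n + m)" "z \<in> hpoly A x (n + m)" using hp_mono[of n "n+m" x] hp_mono[of m "n+m" x] by auto
    then have "y + z \<in> hpoly A x (n + m)" by (rule hp_add)
    then show "u + v \<in> L" unfolding L_def using \<open>u = c * y\<close> \<open>v = c * z\<close>
      by (auto simp: distrib_left[symmetric])
  next
    fix r u assume "r \<in> A" "u \<in> L"
    then obtain y n where "u = c * y" "y \<in> hpoly A x n" unfolding L_def by blast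
    then have "r * y \<in> hpoly A x n" using hp_amult \<open>r \<in> A\<close> by blast
    moreover have "r * u = c * (r * y)" using \<open>u = c * y\<close> by (simp add: mult.left_commute)
    ultimately show "r * u \<in> L" unfolding L_def by blast
  qed
  then have "fin_generated_ideal A L" using noeth unfolding noetherian_ring_def by blast
  then obtain G where G0: "finite G \<and> G \<subseteq> L \<and> L = {z. \<exists>e. (\<forall>f\<in>G. e f \<in> A) \<and> z = (\<Sum>f\<in>G. e f * f)}"
    unfolding fin_generated_ideal_def by (rule exE)
  have G: "finite G" "G \<subseteq> L" "L = {z. \<exists>e. (\<forall>f\<in>G. e f \<in> A) \<and> z = (\<Sum>f\<in>G. e f * f)}"
    using G0 by blast+
  have "\<forall>f\<in>G. \<exists>n. f / c \<in> hpoly A x n"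
  proof
    fix f assume "f \<in> G"
    then obtain y n where "f = c * y" "y \<in> hpoly A x n" using G(2) unfolding L_def by blast
    then show "\<exists>n. f / c \<in> hpoly A x n" using c by auto
  qed
  then obtain N where N: "\<forall>f\<in>G. f / c \<in> hpoly A x N" using bound_hp[OF G(1), of "\<lambda>f. f / c" x] by blast
  have "c * x ^ N \<in> L" unfolding L_def using hp_pow by blast
  then have "c * x ^ N \<in> {z. \<exists>e. (\<forall>f\<in>G. e f \<in> A) \<and> z = (\<Sum>f\<in>G. e f * f)}"
    by (subst G(3)[symmetric])
  then obtain e where e: "\<forall>f\<in>G. e f \<in> A" "c * x ^ N = (\<Sum>f\<in>G. e f * f)" by blast
  have "x ^ N = (c * x ^ N) / c" using c by simp
  also have "\<dots> = (\<Sum>f\<in>G. e f * (f / c))" unfolding e(2) by (simp add: sum_divide_distrib)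
  finally have xN: "x ^ N = (\<Sum>f\<in>G. e f * (f / c))" .
  have "(\<Sum>f\<in>G. e f * (f / c)) \<in> hpoly A x N"
  proof (rule sum_in)
    show "0 \<in> hpoly A x N" by (rule hp_zero)
    show "u + v \<in> hpoly A x N" if "u \<in> hpoly A x N" "v \<in> hpoly A x N" for u v
      using that by (rule hp_add)
    show "e f * (f / c) \<in> hpoly A x N" if "f \<in> G" for f
      using that e(1) N by (intro hp_amult) auto
  qed
  then have "x ^ N \<in> hpoly A x N" using xN by simp
  then obtain d where d: "\<forall>i<N. d i \<in> A" "x ^ N = (\<Sum>i<N. d i * x ^ i)"
    using hp_sum2 by blast
  have "integral_over A x"
    unfolding integral_over_def
  proof (intro exI conjI)
    show "\<forall>i<N. (\<lambda>i. - d i) i \<in> A" using d(1) S(6) by auto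
    show "x ^ N + (\<Sum>i<N. (\<lambda>i. - d i) i * x ^ i) = 0"
      using d(2) by (simp add: sum_negf)
  qed
  then show ?thesis using icl unfolding integrally_closed_def by blast
qed

end


inductive PPn :: "'k::field set \<Rightarrow> nat \<Rightarrow> 'k set \<Rightarrow> bool" for A where
  PP0: "PPn A 0 A"
| PPS: "prime_ideal_of A Q \<Longrightarrow> Q \<noteq> {0} \<Longrightarrow> PPn A n X \<Longrightarrow> PPn A (Suc n) (submod_mult Q X)"

context dd begin

lemma PPn_ideal: "PPn A n X \<Longrightarrow> ring_ideal A X"
proof (induction rule: PPn.induct)
  case PP0 then show ?case by (rule A_ideal)
next
  case (PPS Q n X)
  have "ring_ideal A Q" using PPS.hyps(1) unfolding prime_ideal_of_def by blast
  moreover have "X \<subseteq> A" using PPS.IH unfolding ring_ideal_def by blast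
  ultimately show ?case by (rule ideal_mul[OF _ sub])
qed

lemma PPn_mul: "PPn A n X \<Longrightarrow> PPn A m Y \<Longrightarrow> PPn A (n + m) (submod_mult X Y)"
proof (induction rule: PPn.induct)
  case PP0
  then have "submod_mult A Y = Y" using mul_A[OF sub] PPn_ideal ideal_amod by blast
  then show ?case using PP0 by simp
next
  case (PPS Q n X)
  then show ?case using PPn.PPS[of A Q "n + m" "submod_mult X Y"] by (simp add: mul_assoc)
qed

lemma PPn_factor:
  "PPn A n X \<Longrightarrow> maximal_ideal_of A P \<Longrightarrow> X \<subseteq> P \<Longrightarrow>
    \<exists>m Y. n = Suc m \<and> PPn A m Y \<and> X = submod_mult P Y"
proof (induction rule: PPn.induct)
  case PP0
  then show ?case unfolding maximal_ideal_of_def ring_ideal_def by blast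
next
  case (PPS Q n X)
  have Pp: "prime_ideal_of A P" using maximal_prime PPS.prems(1) by blast
  have QA: "Q \<subseteq> A" using PPS.hyps(1) unfolding prime_ideal_of_def ring_ideal_def by blast
  have XA: "X \<subseteq> A" using PPn_ideal[OF PPS.hyps(3)] unfolding ring_ideal_def by blast
  have "Q \<subseteq> P \<or> X \<subseteq> P" by (rule prime_mul[OF Pp QA XA PPS.prems(2)])
  then show ?case
  proof
    assume "Q \<subseteq> P"
    have Qm: "maximal_ideal_of A Q" using dim1 PPS.hyps(1,2) by blast
    have "ring_ideal A P" "P \<noteq> A" using PPS.prems(1) unfolding maximal_ideal_of_def by auto
    then have "P = Q" using Qm \<open>Q \<subseteq> P\<close> unfolding maximal_ideal_of_def by blast
    then show ?thesis using PPS.hyps(3) by blast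
  next
    assume "X \<subseteq> P"
    then obtain m Y where "n = Suc m" "PPn A m Y" "X = submod_mult P Y" using PPS.IH PPS.prems(1) by blast
    moreover have "submod_mult Q (submod_mult P Y) = submod_mult P (submod_mult Q Y)"
      using mul_assoc[of Q P Y] mul_assoc[of P Q Y] mul_comm[of P Q] by simp
    moreover have "PPn A (Suc m) (submod_mult Q Y)" using PPS.hyps(1,2) \<open>PPn A m Y\<close> by (rule PPn.PPS)
    ultimately show ?thesis by auto
  qed
qed

lemma adj_mul_sub:
  assumes I: "ring_ideal A I" and ab: "a \<in> A" "b \<in> A" "a * b \<in> I"
  shows "submod_mult (adj I a) (adj I b) \<subseteq> I"
proof (rule mul_least)
  show "0 \<in> I" using I unfolding ring_ideal_def by blast
  show "x + y \<in> I" if "x \<in> I" "y \<in> I" for x y using I that unfolding ring_ideal_def by blast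
  fix u v assume "u \<in> adj I a" "v \<in> adj I b"
  then obtain i r i' s where h: "i \<in> I" "r \<in> A" "u = i + a * r" "i' \<in> I" "s \<in> A" "v = i' + b * s"
    unfolding adj_def by blast
  have vA: "v \<in> A" using h I ab unfolding ring_ideal_def by (auto simp: S)
  have "u * v = v * i + (a * r) * i' + (r * s) * (a * b)" using h by (simp add: algebra_simps)
  moreover have "v * i \<in> I" "(a * r) * i' \<in> I" "(r * s) * (a * b) \<in> I"
    using I h vA ab S(5)[of r s] S(5)[of a r] unfolding ring_ideal_def by (auto simp: mult.commute)
  ultimately show "u * v \<in> I" using I unfolding ring_ideal_def by auto
qed

lemma contains_PP0: "ring_ideal A I0 \<Longrightarrow> I0 \<noteq> {0} \<longrightarrow> (\<exists>n X. PPn A n X \<and> X \<subseteq> I0)"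
proof (rule noeth_induct[where P="\<lambda>I. I \<noteq> {0} \<longrightarrow> (\<exists>n X. PPn A n X \<and> X \<subseteq> I)"])
  fix I assume hyp: "ring_ideal A I"
    and IH0: "\<And>J. ring_ideal A J \<Longrightarrow> I \<subset> J \<Longrightarrow> J \<noteq> {0} \<longrightarrow> (\<exists>n X. PPn A n X \<and> X \<subseteq> J)"
  have IH: "\<exists>n X. PPn A n X \<and> X \<subseteq> J" if "ring_ideal A J" "I \<subset> J" "J \<noteq> {0}" for J
    using IH0 that by blast
  show "I \<noteq> {0} \<longrightarrow> (\<exists>n X. PPn A n X \<and> X \<subseteq> I)"
  proof
  assume nz: "I \<noteq> {0}"
  show "\<exists>n X. PPn A n X \<and> X \<subseteq> I"
  proof (cases "I = A")
    case True then show ?thesis using PP0 by blast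
  next
    case nA: False
    show ?thesis
    proof (cases "prime_ideal_of A I")
      case True
      have "PPn A (Suc 0) (submod_mult I A)" using True nz PP0 by (intro PPS)
      moreover have "submod_mult I A = I" using mul_A2[OF sub] hyp ideal_amod by blast
      ultimately show ?thesis by auto
    next
      case False
      then obtain a b where ab: "a \<in> A" "b \<in> A" "a * b \<in> I" "a \<notin> I" "b \<notin> I"
        using hyp nA unfolding prime_ideal_of_def by blast
      have Ia: "ring_ideal A (adj I a)" "I \<subset> adj I a"
        using adj_props[OF hyp ab(1)] ab(4) by auto
      have Ib: "ring_ideal A (adj I b)" "I \<subset> adj I b"
        using adj_props[OF hyp ab(2)] ab(5) by auto
      have "adj I a \<noteq> {0}" "adj I b \<noteq> {0}" using Ia(2) Ib(2) nz hyp unfolding ring_ideal_def by auto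
      then obtain n X where X: "PPn A n X" "X \<subseteq> adj I a" using IH[OF Ia] by blast
      obtain m Y where Y: "PPn A m Y" "Y \<subseteq> adj I b" using IH[OF Ib] \<open>adj I b \<noteq> {0}\<close> by blast
      have "PPn A (n + m) (submod_mult X Y)" using PPn_mul X(1) Y(1) by blast
      moreover have "submod_mult X Y \<subseteq> I"
        using mul_mono[OF X(2) Y(2)] adj_mul_sub[OF hyp ab(1-3)] by blast
      ultimately show ?thesis by blast
    qed
  qed
  qed
qed

lemma contains_PP: "ring_ideal A I \<Longrightarrow> I \<noteq> {0} \<Longrightarrow> \<exists>n X. PPn A n X \<and> X \<subseteq> I"
  using contains_PP0 by blast

end


context dd begin

lemma max_ideal: "maximal_ideal_of A P \<Longrightarrow> ring_ideal A P"
  by (simp add: maximal_ideal_of_def)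

lemma max_sub: "maximal_ideal_of A P \<Longrightarrow> P \<subseteq> A"
  using max_ideal by (simp add: ring_ideal_def)

lemma pA_ideal: "a \<in> A \<Longrightarrow> ring_ideal A (pA A a)"
proof -
  assume a: "a \<in> A"
  have "pA A a \<subseteq> A" unfolding pA_def using a S(5) by blast
  then show ?thesis unfolding ideal_amod using pA_amod[OF sub] by blast
qed

lemma inv_ne:
  assumes P: "maximal_ideal_of A P" "P \<noteq> {0}"
  shows "\<exists>x\<in>finv A P. x \<notin> A"
proof -
  have PI: "ring_ideal A P" using P max_ideal by blast
  obtain a where a: "a \<in> P" "a \<noteq> 0" using P(2) PI unfolding ring_ideal_def by blast
  have aA: "a \<in> A" using a PI unfolding ring_ideal_def by blast
  have "a * 1 \<in> pA A a" unfolding pA_def using S(2) by blast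
  then have "pA A a \<noteq> {0}" using a(2) by force
  then have "\<exists>n X. PPn A n X \<and> X \<subseteq> pA A a" by (rule contains_PP[OF pA_ideal[OF aA]])
  define n where "n = (LEAST n. \<exists>X. PPn A n X \<and> X \<subseteq> pA A a)"
  have "\<exists>X. PPn A n X \<and> X \<subseteq> pA A a"
    unfolding n_def by (rule LeastI_ex) (use \<open>\<exists>n X. PPn A n X \<and> X \<subseteq> pA A a\<close> in blast)
  then obtain X where X: "PPn A n X" "X \<subseteq> pA A a" by blast
  have min: "\<not> (\<exists>X. PPn A m X \<and> X \<subseteq> pA A a)" if "m < n" for m
    using not_less_Least[of m "\<lambda>n. \<exists>X. PPn A n X \<and> X \<subseteq> pA A a"] that unfolding n_def by simp
  have "pA A a \<subseteq> P"
  proof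
    fix z assume "z \<in> pA A a"
    then obtain r where "r \<in> A" "z = a * r" unfolding pA_def by blast
    then have "r * a \<in> P" using PI a(1) unfolding ring_ideal_def by blast
    then show "z \<in> P" using \<open>z = a * r\<close> by (simp add: mult.commute)
  qed
  then have "X \<subseteq> P" using X(2) by blast
  then have "\<exists>m Y. n = Suc m \<and> PPn A m Y \<and> X = submod_mult P Y" by (rule PPn_factor[OF X(1) P(1)])
  then obtain m Y where mY: "n = Suc m" "PPn A m Y" "X = submod_mult P Y" by blast
  then have "\<not> Y \<subseteq> pA A a" using min[of m] by blast
  then obtain b where b: "b \<in> Y" "b \<notin> pA A a" by blast
  have "b / a \<in> finv A P"
    unfolding finv_def
  proof (rule CollectI, rule ballI)
    fix p assume "p \<in> P"
    then have "p * b \<in> X" using mY(3) b(1) mul_in by blast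
    then obtain r where r: "r \<in> A" "p * b = a * r" using X(2) unfolding pA_def by blast
    have "b / a * p = (p * b) / a" by simp
    also have "\<dots> = r" using r(2) a(2) by simp
    finally show "b / a * p \<in> A" using r(1) by simp
  qed
  moreover have "b / a \<notin> A"
  proof
    assume "b / a \<in> A"
    then have "a * (b / a) \<in> pA A a" unfolding pA_def by blast
    then show False using b(2) a(2) by simp
  qed
  ultimately show ?thesis by blast
qed

lemma one_finv: "P \<subseteq> A \<Longrightarrow> 1 \<in> finv A P"
  unfolding finv_def by auto

lemma grow:
  assumes I: "ring_ideal A I" "I \<noteq> {0}" and P: "maximal_ideal_of A P" "P \<noteq> {0}" and IP: "I \<subseteq> P"
  shows "ring_ideal A (submod_mult I (finv A P))" "I \<subset> submod_mult I (finv A P)"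
proof -
  have sub1: "submod_mult I (finv A P) \<subseteq> A"
  proof (rule mul_least)
    show "0 \<in> A" "\<And>x y. x \<in> A \<Longrightarrow> y \<in> A \<Longrightarrow> x + y \<in> A" using S by auto
    fix i x assume "i \<in> I" "x \<in> finv A P"
    then show "i * x \<in> A" using IP unfolding finv_def by (auto simp: mult.commute)
  qed
  show id: "ring_ideal A (submod_mult I (finv A P))"
    unfolding ideal_amod using sub1 mul_amod I(1) ideal_amod by blast
  have sup: "I \<subseteq> submod_mult I (finv A P)"
  proof
    fix i assume "i \<in> I"
    then have "i * 1 \<in> submod_mult I (finv A P)" using one_finv[OF max_sub[OF P(1)]] by (intro mul_in)
    then show "i \<in> submod_mult I (finv A P)" by simp
  qed
  show "I \<subset> submod_mult I (finv A P)"
  proof (rule ccontr)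
    assume "\<not> I \<subset> submod_mult I (finv A P)"
    then have eq: "submod_mult I (finv A P) = I" using sup by blast
    obtain x where x: "x \<in> finv A P" "x \<notin> A" using inv_ne[OF P] by blast
    have xI: "x * y \<in> I" if "y \<in> I" for y
      using mul_in[OF that x(1)] eq by (simp add: mult.commute)
    have xn: "x ^ n * y \<in> I" if "y \<in> I" for y n
      using that
    proof (induction n arbitrary: y)
      case (Suc n)
      then have "x ^ n * (x * y) \<in> I" using xI by blast
      then show ?case by (simp add: mult.assoc mult.left_commute)
    qed simp
    obtain i0 where i0: "i0 \<in> I" "i0 \<noteq> 0" using I unfolding ring_ideal_def by blast
    have "\<forall>n. i0 * x ^ n \<in> A" using xn[OF i0(1)] I(1) unfolding ring_ideal_def by (auto simp: mult.commute)
    then have "x \<in> A" using cic i0(2) by blast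
    then show False using x(2) by blast
  qed
qed

lemma invertible0: "ring_ideal A I0 \<Longrightarrow> I0 \<noteq> {0} \<longrightarrow> (\<exists>J. submod_mult I0 J = A)"
proof (rule noeth_induct[where P="\<lambda>I. I \<noteq> {0} \<longrightarrow> (\<exists>J. submod_mult I J = A)"])
  fix I assume hyp: "ring_ideal A I"
    and IH0: "\<And>J. ring_ideal A J \<Longrightarrow> I \<subset> J \<Longrightarrow> J \<noteq> {0} \<longrightarrow> (\<exists>K. submod_mult J K = A)"
  show "I \<noteq> {0} \<longrightarrow> (\<exists>J. submod_mult I J = A)"
  proof
    assume nz: "I \<noteq> {0}"
    show "\<exists>J. submod_mult I J = A"
    proof (cases "I = A")
      case True then show ?thesis using mul_A[OF sub amod_A[OF sub]] by blast
    next
      case False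
      then obtain P where P: "maximal_ideal_of A P" "I \<subseteq> P" using max_exists hyp by blast
      have "P \<noteq> {0}" using P(2) nz hyp unfolding ring_ideal_def by blast
      note g = grow[OF hyp nz P(1) this P(2)]
      have "submod_mult I (finv A P) \<noteq> {0}" using g(2) nz hyp unfolding ring_ideal_def by blast
      then obtain K where "submod_mult (submod_mult I (finv A P)) K = A" using IH0[OF g] by blast
      then show ?thesis unfolding mul_assoc by blast
    qed
  qed
qed

lemma invertible: "ring_ideal A I \<Longrightarrow> I \<noteq> {0} \<Longrightarrow> \<exists>J. submod_mult I J = A"
  using invertible0 by blast

lemma PPinv:
  assumes P: "maximal_ideal_of A P" "P \<noteq> {0}"
  shows "submod_mult P (finv A P) = A"
proof -
  obtain J where J: "submod_mult P J = A" using invertible max_ideal P by blast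
  have "J \<subseteq> finv A P"
  proof
    fix y assume "y \<in> J"
    then have "\<forall>p\<in>P. p * y \<in> A" using J mul_in by blast
    then show "y \<in> finv A P" unfolding finv_def by (auto simp: mult.commute)
  qed
  then have "A \<subseteq> submod_mult P (finv A P)" using J mul_mono[of P P J "finv A P"] by blast
  moreover have "submod_mult P (finv A P) \<subseteq> A"
  proof (rule mul_least)
    show "0 \<in> A" "\<And>x y. x \<in> A \<Longrightarrow> y \<in> A \<Longrightarrow> x + y \<in> A" using S by auto
    fix i x assume "i \<in> P" "x \<in> finv A P"
    then show "i * x \<in> A" unfolding finv_def by (auto simp: mult.commute)
  qed
  ultimately show ?thesis by blast
qed

lemma frac_amod: "fractional_ideal A I \<Longrightarrow> amod A I"
  unfolding fractional_ideal_def amod_def by blast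

lemma frac_invertible:
  assumes I: "fractional_ideal A I"
  shows "\<exists>J. submod_mult I J = A"
proof -
  obtain d where d: "d \<in> A" "d \<noteq> 0" "\<forall>x\<in>I. d * x \<in> A" using I unfolding fractional_ideal_def by blast
  have am: "amod A I" using frac_amod I by blast
  have eq: "submod_mult (pA A d) I = (\<lambda>y. d * y) ` I" using mul_pA[OF sub am] .
  have "ring_ideal A (submod_mult (pA A d) I)"
    unfolding ideal_amod using mul_amod2[OF am, of "pA A d"] eq d(3) by auto
  moreover have "submod_mult (pA A d) I \<noteq> {0}"
  proof -
    obtain y where "y \<in> I" "y \<noteq> 0" using I unfolding fractional_ideal_def by blast
    then have "d * y \<in> submod_mult (pA A d) I" "d * y \<noteq> 0" using eq d(2) by auto
    then show ?thesis by blast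
  qed
  ultimately obtain J where "submod_mult (submod_mult (pA A d) I) J = A" using invertible by blast
  then have "submod_mult I (submod_mult (pA A d) J) = A"
    using mul_assoc[of "pA A d" I J] mul_assoc[of I "pA A d" J] mul_comm[of I "pA A d"] by simp
  then show ?thesis by blast
qed

end


lemma principal_pA: "principal_frac A X \<longleftrightarrow> (\<exists>x. x \<noteq> 0 \<and> X = pA A x)"
  unfolding principal_frac_def pA_def by simp

context dd begin

lemma frac_inv2:
  assumes I: "fractional_ideal A I"
  shows "submod_mult I (finv A I) = A"
proof -
  obtain J where J: "submod_mult I J = A" using frac_invertible I by blast
  have "J \<subseteq> finv A I"
  proof
    fix y assume "y \<in> J"
    then have "\<forall>p\<in>I. p * y \<in> A" using J mul_in by blast
    then show "y \<in> finv A I" unfolding finv_def by (auto simp: mult.commute)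
  qed
  then have "A \<subseteq> submod_mult I (finv A I)" using J mul_mono[of I I J "finv A I"] by blast
  moreover have "submod_mult I (finv A I) \<subseteq> A"
  proof (rule mul_least)
    show "0 \<in> A" "\<And>x y. x \<in> A \<Longrightarrow> y \<in> A \<Longrightarrow> x + y \<in> A" using S by auto
    fix i x assume "i \<in> I" "x \<in> finv A I"
    then show "i * x \<in> A" unfolding finv_def by (auto simp: mult.commute)
  qed
  ultimately show ?thesis by blast
qed

lemma mul_subring: assumes "subring B" "I \<subseteq> B" "J \<subseteq> B" shows "submod_mult I J \<subseteq> B"
proof (rule mul_least)
  show "0 \<in> B" by (rule sub_simps(1)[OF assms(1)])
  show "x + y \<in> B" if "x \<in> B" "y \<in> B" for x y using that by (rule sub_simps(3)[OF assms(1)])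
  show "i * j \<in> B" if "i \<in> I" "j \<in> J" for i j
    using that assms(2,3) sub_simps(5)[OF assms(1), of i j] by blast
qed

lemma pow_subring: "subring B \<Longrightarrow> A \<subseteq> B \<Longrightarrow> I \<subseteq> B \<Longrightarrow> submod_pow A I n \<subseteq> B"
  by (induction n) (auto dest: mul_subring)

lemma one_to_two:
  assumes tor: "torsion_class_group A" and ov: "overring A B"
  shows "localization_of A B"
proof -
  have B: "subring B" "A \<subseteq> B" using ov unfolding overring_def by auto
  note SB = sub_simps[OF B(1)]
  define T where "T = {s. s \<in> A \<and> s \<noteq> 0 \<and> inverse s \<in> B}"
  have mc: "mult_closed_nonzero A T"
    unfolding mult_closed_nonzero_def T_def
  proof (intro conjI ballI)
    show "{s. s \<in> A \<and> s \<noteq> 0 \<and> inverse s \<in> B} \<subseteq> A - {0}" by blast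
    show "1 \<in> {s. s \<in> A \<and> s \<noteq> 0 \<and> inverse s \<in> B}" using S(2) SB(2) by simp
    fix s t assume "s \<in> {s. s \<in> A \<and> s \<noteq> 0 \<and> inverse s \<in> B}" "t \<in> {s. s \<in> A \<and> s \<noteq> 0 \<and> inverse s \<in> B}"
    then show "s * t \<in> {s. s \<in> A \<and> s \<noteq> 0 \<and> inverse s \<in> B}"
      using S(5)[of s t] SB(5)[of "inverse s" "inverse t"] by (simp add: inverse_mult_distrib)
  qed
  have "B = {a / s | a s. a \<in> A \<and> s \<in> T}"
  proof
    show "{a / s | a s. a \<in> A \<and> s \<in> T} \<subseteq> B"
    proof
      fix z assume "z \<in> {a / s | a s. a \<in> A \<and> s \<in> T}"
      then obtain a s where "a \<in> A" "s \<in> T" "z = a / s" by blast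
      then show "z \<in> B" using SB(5)[of a "inverse s"] B(2) unfolding T_def by (auto simp: divide_inverse)
    qed
    show "B \<subseteq> {a / s | a s. a \<in> A \<and> s \<in> T}"
    proof
      fix b assume bB: "b \<in> B"
      define I where "I = {x + y * b | x y. x \<in> A \<and> y \<in> A}"
      obtain a0 s0 where as0: "a0 \<in> A" "s0 \<in> A" "s0 \<noteq> 0" "b = a0 / s0" using fracf by blast
      have oneI: "1 \<in> I" unfolding I_def using S(1,2) by (intro CollectI exI[of _ 1] exI[of _ 0]) simp
      have bI: "b \<in> I" unfolding I_def using S(1,2) by (intro CollectI exI[of _ 0] exI[of _ 1]) simp
      have IB: "I \<subseteq> B"
      proof
        fix u assume "u \<in> I"
        then obtain x y where "x \<in> A" "y \<in> A" "u = x + y * b" unfolding I_def by blast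
        then show "u \<in> B" using B(2) SB(3)[of x "y * b"] SB(5)[of y b] bB by auto
      qed
      have fI: "fractional_ideal A I"
        unfolding fractional_ideal_def
      proof (intro conjI ballI)
        show "I \<noteq> {0}" using oneI by auto
        show "0 \<in> I" unfolding I_def using S(1) by (intro CollectI exI[of _ 0] exI[of _ 0]) simp
        fix u v assume "u \<in> I" "v \<in> I"
        then obtain x y x' y' where "x \<in> A" "y \<in> A" "x' \<in> A" "y' \<in> A" "u = x + y * b" "v = x' + y' * b"
          unfolding I_def by blast
        then show "u + v \<in> I" unfolding I_def using S(3)
          by (intro CollectI exI[of _ "x + x'"] exI[of _ "y + y'"]) (auto simp: algebra_simps)
      next
        fix a u assume "a \<in> A" "u \<in> I"
        then obtain x y where "x \<in> A" "y \<in> A" "u = x + y * b" unfolding I_def by blast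
        then show "a * u \<in> I" unfolding I_def using S(5) \<open>a \<in> A\<close>
          by (intro CollectI exI[of _ "a * x"] exI[of _ "a * y"]) (auto simp: algebra_simps)
      next
        show "\<exists>d\<in>A. d \<noteq> 0 \<and> (\<forall>x\<in>I. d * x \<in> A)"
        proof (intro bexI conjI ballI)
          fix u assume "u \<in> I"
          then obtain x y where "x \<in> A" "y \<in> A" "u = x + y * b" unfolding I_def by blast
          then have "s0 * u = s0 * x + y * a0" using as0 by (simp add: algebra_simps)
          then show "s0 * u \<in> A" using S \<open>x \<in> A\<close> \<open>y \<in> A\<close> as0 by simp
        qed (use as0 in auto)
      qed
      define J where "J = finv A I"
      have IJ: "submod_mult I J = A" unfolding J_def using frac_inv2[OF fI] .
      have JA: "J \<subseteq> A"
      proof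
        fix y assume "y \<in> J"
        then have "y * 1 \<in> A" using oneI unfolding J_def finv_def by blast
        then show "y \<in> A" by simp
      qed
      have Jb: "\<forall>y\<in>J. y * b \<in> A" unfolding J_def finv_def using bI by blast
      have amJ: "amod A J" unfolding J_def by (rule finv_amod[OF sub])
      have fJ: "fractional_ideal A J"
        unfolding fractional_ideal_def
      proof (intro conjI)
        show "J \<noteq> {0}"
        proof
          assume "J = {0}"
          then have "submod_mult I J \<subseteq> {0}" by (intro mul_least) auto
          then show False using IJ S(2) by auto
        qed
        show "\<exists>d\<in>A. d \<noteq> 0 \<and> (\<forall>x\<in>J. d * x \<in> A)" using S(2) JA by (intro bexI[of _ 1]) auto
        show "0 \<in> J" "\<forall>x\<in>J. \<forall>y\<in>J. x + y \<in> J" "\<forall>a\<in>A. \<forall>x\<in>J. a * x \<in> J"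
          using amJ unfolding amod_def by blast+
      qed
      obtain n where n: "n > 0" "principal_frac A (submod_pow A J n)"
        using tor fJ unfolding torsion_class_group_def by blast
      then obtain t where t: "t \<noteq> 0" "submod_pow A J n = pA A t" unfolding principal_pA by blast
      have "t * 1 \<in> pA A t" unfolding pA_def using S(2) by blast
      then have tJ: "t \<in> J" using t(2) pow_sub1[OF sub amJ JA n(1)] by auto
      have amI: "amod A I" using frac_amod fI by blast
      have "A = submod_pow A A n" using pow_A[OF sub] by simp
      also have "\<dots> = submod_mult (submod_pow A I n) (submod_pow A J n)"
        using pow_mul_distrib[OF sub amI amJ] IJ by simp
      also have "\<dots> = submod_mult (pA A t) (submod_pow A I n)" using t(2) mul_comm[of "pA A t" "submod_pow A I n"] by simp
      also have "\<dots> = (\<lambda>y. t * y) ` submod_pow A I n" by (rule mul_pA[OF sub pow_amod[OF sub amI]])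
      finally have "1 \<in> (\<lambda>y. t * y) ` submod_pow A I n" using S(2) by auto
      then obtain z where z: "z \<in> submod_pow A I n" "1 = t * z" by blast
      have "z \<in> B" using pow_subring[OF B(1) B(2) IB] z(1) by blast
      moreover have "inverse t = z" using z(2) t(1) by (simp add: field_simps)
      ultimately have "t \<in> T" unfolding T_def using tJ JA t(1) by auto
      moreover have "t * b \<in> A" using Jb tJ by blast
      moreover have "b = (t * b) / t" using t(1) by simp
      ultimately show "b \<in> {a / s | a s. a \<in> A \<and> s \<in> T}" by blast
    qed
  qed
  then show ?thesis unfolding localization_of_def using mc by blast
qed

end


context dd begin

definition tors :: "'k set \<Rightarrow> bool" where
  "tors X \<longleftrightarrow> (\<exists>n>0. \<exists>x. x \<noteq> 0 \<and> submod_pow A X n = pA A x)"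

lemma torsI: "n > 0 \<Longrightarrow> x \<noteq> 0 \<Longrightarrow> submod_pow A X n = pA A x \<Longrightarrow> tors X"
  unfolding tors_def by blast

lemma tors_mul:
  assumes X: "amod A X" "tors X" and Y: "amod A Y" "tors Y"
  shows "tors (submod_mult X Y)"
proof -
  obtain m x where m: "m > 0" "x \<noteq> 0" "submod_pow A X m = pA A x" using X(2) unfolding tors_def by blast
  obtain k y where k: "k > 0" "y \<noteq> 0" "submod_pow A Y k = pA A y" using Y(2) unfolding tors_def by blast
  have "submod_pow A (submod_mult X Y) (m * k) = submod_mult (submod_pow A X (m * k)) (submod_pow A Y (k * m))"
    using pow_mul_distrib[OF sub X(1) Y(1)] by (simp add: mult.commute)
  also have "\<dots> = submod_mult (submod_pow A (pA A x) k) (submod_pow A (pA A y) m)"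
    using pow_mult[OF sub X(1), of m k] pow_mult[OF sub Y(1), of k m] m(3) k(3) by simp
  also have "\<dots> = pA A (x ^ k * y ^ m)" by (simp add: pow_pA[OF sub] pA_mult[OF sub])
  finally show ?thesis using m k by (intro torsI[of "m * k" "x ^ k * y ^ m"]) auto
qed

lemma tors_A: "tors A"
  using pow_A[OF sub, of 1] pA_1[of A, symmetric] by (intro torsI[of 1 1]) auto

lemma tors_int0:
  assumes hypP: "\<And>P. maximal_ideal_of A P \<Longrightarrow> P \<noteq> {0} \<Longrightarrow> tors P"
  shows "ring_ideal A I0 \<Longrightarrow> I0 \<noteq> {0} \<longrightarrow> tors I0"
proof (rule noeth_induct[where P="\<lambda>I. I \<noteq> {0} \<longrightarrow> tors I"])
  fix I assume hyp: "ring_ideal A I"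
    and IH0: "\<And>J. ring_ideal A J \<Longrightarrow> I \<subset> J \<Longrightarrow> J \<noteq> {0} \<longrightarrow> tors J"
  show "I \<noteq> {0} \<longrightarrow> tors I"
  proof
    assume nz: "I \<noteq> {0}"
    show "tors I"
    proof (cases "I = A")
      case True then show ?thesis using tors_A by simp
    next
      case False
      then obtain P where P: "maximal_ideal_of A P" "I \<subseteq> P" using max_exists hyp by blast
      have "P \<noteq> {0}" using P(2) nz hyp unfolding ring_ideal_def by blast
      note g = grow[OF hyp nz P(1) this P(2)]
      have "submod_mult I (finv A P) \<noteq> {0}" using g(2) nz hyp unfolding ring_ideal_def by blast
      then have t1: "tors (submod_mult I (finv A P))" using IH0[OF g] by blast
      have t2: "tors P" using hypP P(1) \<open>P \<noteq> {0}\<close> by blast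
      have "submod_mult P (submod_mult I (finv A P)) = submod_mult I (submod_mult P (finv A P))"
        using mul_assoc[of P I "finv A P"] mul_assoc[of I P "finv A P"] mul_comm[of P I] by simp
      also have "\<dots> = I"
      proof -
        have "amod A I" using hyp ideal_amod by blast
        then show ?thesis using PPinv[OF P(1) \<open>P \<noteq> {0}\<close>] mul_A2[OF sub] by simp
      qed
      finally have eq: "submod_mult P (submod_mult I (finv A P)) = I" .
      have "tors (submod_mult P (submod_mult I (finv A P)))"
        using tors_mul[OF _ t2 _ t1] max_ideal[OF P(1)] g(1) ideal_amod by blast
      then show ?thesis using eq by simp
    qed
  qed
qed

lemma tors_all:
  assumes hypP: "\<And>P. maximal_ideal_of A P \<Longrightarrow> P \<noteq> {0} \<Longrightarrow> tors P"
  shows "torsion_class_group A"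
  unfolding torsion_class_group_def
proof (intro allI impI)
  fix I assume I: "fractional_ideal A I"
  obtain d where d: "d \<in> A" "d \<noteq> 0" "\<forall>x\<in>I. d * x \<in> A" using I unfolding fractional_ideal_def by blast
  have am: "amod A I" using frac_amod I by blast
  have eq: "submod_mult (pA A d) I = (\<lambda>y. d * y) ` I" using mul_pA[OF sub am] .
  have "ring_ideal A (submod_mult (pA A d) I)"
    unfolding ideal_amod using mul_amod2[OF am, of "pA A d"] eq d(3) by auto
  moreover have "submod_mult (pA A d) I \<noteq> {0}"
  proof -
    obtain y where "y \<in> I" "y \<noteq> 0" using I unfolding fractional_ideal_def by blast
    then have "d * y \<in> submod_mult (pA A d) I" "d * y \<noteq> 0" using eq d(2) by auto
    then show ?thesis by blast
  qed
  ultimately have "tors (submod_mult (pA A d) I)" using tors_int0[OF hypP] by blast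
  then obtain n y where n: "n > 0" "y \<noteq> 0" "submod_pow A (submod_mult (pA A d) I) n = pA A y"
    unfolding tors_def by blast
  have dn: "d ^ n \<noteq> 0" using d(2) by simp
  have "submod_pow A I n = submod_mult A (submod_pow A I n)"
    using mul_A[OF sub pow_amod[OF sub am]] by simp
  also have "\<dots> = submod_mult (submod_mult (pA A (inverse (d ^ n))) (pA A (d ^ n))) (submod_pow A I n)"
    using pA_mult[OF sub] dn pA_1[of A] by simp
  also have "\<dots> = submod_mult (pA A (inverse (d ^ n))) (submod_pow A (submod_mult (pA A d) I) n)"
    using pow_mul_distrib[OF sub pA_amod[OF sub] am] pow_pA[OF sub] mul_assoc by simp
  also have "\<dots> = pA A (inverse (d ^ n) * y)" using n(3) pA_mult[OF sub] by simp
  finally have "submod_pow A I n = pA A (inverse (d ^ n) * y)" .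
  then show "\<exists>n>0. principal_frac A (submod_pow A I n)"
    unfolding principal_pA using n(1,2) dn by (intro exI[of _ n] conjI exI[of _ "inverse (d ^ n) * y"]) auto
qed

end


context dd begin

lemma pow_in_prime:
  assumes Q: "prime_ideal_of A Q" and P: "P \<subseteq> A" "amod A P"
  shows "k > 0 \<Longrightarrow> submod_pow A P k \<subseteq> Q \<Longrightarrow> P \<subseteq> Q"
proof (induction k)
  case 0 then show ?case by simp
next
  case (Suc k)
  have "P \<subseteq> Q \<or> submod_pow A P k \<subseteq> Q"
    using prime_mul[OF Q P(1) pow_sub[OF sub P(2) P(1)]] Suc.prems(2) by simp
  then show ?case
  proof
    assume h: "submod_pow A P k \<subseteq> Q"
    show ?thesis
    proof (cases "k = 0")
      case True
      then have "A \<subseteq> Q" using h by simp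
      moreover have "Q \<subseteq> A" "Q \<noteq> A" using Q unfolding prime_ideal_of_def ring_ideal_def by auto
      ultimately show ?thesis by blast
    next
      case False then show ?thesis using Suc.IH h by simp
    qed
  qed
qed

lemma powers_above:
  assumes P: "maximal_ideal_of A P" "P \<noteq> {0}"
  shows "ring_ideal A L \<Longrightarrow> submod_pow A P m \<subseteq> L \<Longrightarrow> \<exists>j. L = submod_pow A P j"
proof (induction m arbitrary: L)
  case 0
  then have "L = A" unfolding ring_ideal_def by auto
  then show ?case by (intro exI[of _ 0]) simp
next
  case (Suc m)
  have PA: "P \<subseteq> A" and amP: "amod A P" using max_ideal[OF P(1)] ideal_amod by auto
  show ?case
  proof (cases "L = A")
    case True then show ?thesis by (intro exI[of _ 0]) simp
  next
    case False
    then obtain Q where Q: "maximal_ideal_of A Q" "L \<subseteq> Q" using max_exists Suc.prems(1) by blast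
    have "P \<subseteq> Q" using pow_in_prime[OF maximal_prime[OF Q(1)] PA amP, of "Suc m"] Suc.prems(2) Q(2) by auto
    moreover have "ring_ideal A Q" "Q \<noteq> A" using Q(1) unfolding maximal_ideal_of_def by auto
    ultimately have "Q = P" using P(1) unfolding maximal_ideal_of_def by blast
    then have LP: "L \<subseteq> P" using Q(2) by simp
    have amL: "amod A L" and LA: "L \<subseteq> A" using Suc.prems(1) ideal_amod by auto
    define L' where "L' = submod_mult L (finv A P)"
    have L'A: "L' \<subseteq> A" unfolding L'_def
    proof (rule mul_least)
      show "0 \<in> A" "\<And>x y. x \<in> A \<Longrightarrow> y \<in> A \<Longrightarrow> x + y \<in> A" using S by auto
      fix i x assume "i \<in> L" "x \<in> finv A P"
      then show "i * x \<in> A" using LP unfolding finv_def by (auto simp: mult.commute)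
    qed
    have idL': "ring_ideal A L'" unfolding ideal_amod L'_def using L'A mul_amod[OF amL] L'_def by auto
    have amPm: "amod A (submod_pow A P m)" using pow_amod[OF sub amP] .
    have "submod_pow A P m = submod_mult (submod_pow A P m) A" using mul_A2[OF sub amPm] by simp
    also have "\<dots> = submod_mult (submod_pow A P m) (submod_mult P (finv A P))" using PPinv[OF P] by simp
    also have "\<dots> = submod_mult (submod_pow A P (Suc m)) (finv A P)"
      using mul_assoc[of "submod_pow A P m" P "finv A P"] mul_comm[of "submod_pow A P m" P] by simp
    also have "\<dots> \<subseteq> L'" unfolding L'_def using Suc.prems(2) by (intro mul_mono) auto
    finally obtain j where j: "L' = submod_pow A P j" using Suc.IH[OF idL'] by blast
    have "submod_mult P L' = submod_mult L (submod_mult P (finv A P))"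
      unfolding L'_def using mul_assoc[of P L "finv A P"] mul_assoc[of L P "finv A P"] mul_comm[of P L] by simp
    also have "\<dots> = L" using PPinv[OF P] mul_A2[OF sub amL] by simp
    finally have "L = submod_pow A P (Suc j)" using j by simp
    then show ?thesis by blast
  qed
qed

lemma pow_inv_cancel:
  assumes P: "maximal_ideal_of A P" "P \<noteq> {0}" and X: "amod A X"
  shows "submod_mult (submod_mult X (submod_pow A P k)) (submod_pow A (finv A P) k) = X"
proof -
  have amP: "amod A P" using max_ideal[OF P(1)] ideal_amod by auto
  have "submod_mult (submod_pow A P k) (submod_pow A (finv A P) k) = submod_pow A (submod_mult P (finv A P)) k"
    using pow_mul_distrib[OF sub amP finv_amod[OF sub]] by simp
  also have "\<dots> = A" by (simp only: PPinv[OF P] pow_A[OF sub])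
  finally have e: "submod_mult (submod_pow A P k) (submod_pow A (finv A P) k) = A" .
  show ?thesis by (simp only: mul_assoc e mul_A2[OF sub X])
qed

lemma cancel:
  assumes P: "maximal_ideal_of A P" "P \<noteq> {0}" and X: "amod A X" and Y: "amod A Y"
    and eq: "submod_mult X (submod_pow A P k) = submod_mult Y (submod_pow A P k)"
  shows "X = Y"
proof -
  have "X = submod_mult (submod_mult X (submod_pow A P k)) (submod_pow A (finv A P) k)"
    by (rule pow_inv_cancel[OF P X, symmetric])
  also have "\<dots> = submod_mult (submod_mult Y (submod_pow A P k)) (submod_pow A (finv A P) k)"
    by (simp only: eq)
  also have "\<dots> = Y" by (rule pow_inv_cancel[OF P Y])
  finally show ?thesis .
qed

lemma hp_finv:
  assumes P: "maximal_ideal_of A P" and b: "b \<in> finv A P"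
  shows "y \<in> hpoly A b n \<Longrightarrow> y \<in> finv A (submod_pow A P n)"
proof (induction n arbitrary: y)
  case 0 then show ?case unfolding finv_def using S(1) by simp
next
  case (Suc n)
  obtain a y' where a: "a \<in> A" "y' \<in> hpoly A b n" "y = a + b * y'" using hp_SucE[OF Suc.prems] by blast
  have y': "y' \<in> finv A (submod_pow A P n)" using Suc.IH[OF a(2)] .
  have PA: "P \<subseteq> A" and amP: "amod A P" using max_ideal[OF P] ideal_amod by auto
  have PnA: "submod_pow A P n \<subseteq> A" using pow_sub[OF sub amP PA] .
  have "submod_mult P (submod_pow A P n) \<subseteq> {z. y * z \<in> A}"
  proof (rule mul_least)
    show "0 \<in> {z. y * z \<in> A}" using S(1) by simp
    show "u + v \<in> {z. y * z \<in> A}" if "u \<in> {z. y * z \<in> A}" "v \<in> {z. y * z \<in> A}" for u v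
      using that S(3) by (simp add: distrib_left)
    fix p q assume pq: "p \<in> P" "q \<in> submod_pow A P n"
    have "y * (p * q) = a * (p * q) + (b * p) * (y' * q)" using a(3) by (simp add: algebra_simps)
    moreover have "a * (p * q) \<in> A" using a(1) pq PA PnA S(5) by blast
    moreover have "b * p \<in> A" using b pq(1) unfolding finv_def by blast
    moreover have "y' * q \<in> A" using y' pq(2) unfolding finv_def by blast
    ultimately show "p * q \<in> {z. y * z \<in> A}" using S(3,5) by simp
  qed
  then show ?case unfolding finv_def by auto
qed

lemma adjoin_set: "adjoin A b = {x. \<exists>n. x \<in> hpoly A b n}"
  using adjoin_hp by blast

lemma adjoin_subring: "subring (adjoin A b)"
  unfolding subring_def adjoin_set
proof (intro conjI ballI)
  show "0 \<in> {x. \<exists>n. x \<in> hpoly A b n}" using hp_zero by blast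
  show "1 \<in> {x. \<exists>n. x \<in> hpoly A b n}" using hp_const[OF S(2)] by blast
  fix x y assume "x \<in> {x. \<exists>n. x \<in> hpoly A b n}" "y \<in> {x. \<exists>n. x \<in> hpoly A b n}"
  then obtain n m where nm: "x \<in> hpoly A b n" "y \<in> hpoly A b m" by blast
  then have x2: "x \<in> hpoly A b (n + m)" and y2: "y \<in> hpoly A b (n + m)"
    using hp_mono[of n "n + m" b] hp_mono[of m "n + m" b] by auto
  show "x + y \<in> {x. \<exists>n. x \<in> hpoly A b n}" using hp_add[OF x2 y2] by blast
  have "(-1) * y \<in> hpoly A b (n + m)" using hp_amult[OF S(6)[OF S(2)] y2] .
  then have "x + (-1) * y \<in> hpoly A b (n + m)" using hp_add[OF x2] by blast
  then have "x - y \<in> hpoly A b (n + m)" by simp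
  then show "x - y \<in> {x. \<exists>n. x \<in> hpoly A b n}" by blast
  show "x * y \<in> {x. \<exists>n. x \<in> hpoly A b n}" using hp_mult[OF nm] by blast
qed

lemma four_to_one:
  assumes nt: "\<not> torsion_class_group A"
  shows "\<exists>B b. overring A B \<and> B \<noteq> A \<and> B = adjoin A b \<and> units_of_ring B = units_of_ring A"
proof -
  obtain P where P: "maximal_ideal_of A P" "P \<noteq> {0}" and ntP: "\<not> tors P"
    using tors_all nt by blast
  have PA: "P \<subseteq> A" and amP: "amod A P" using max_ideal[OF P(1)] ideal_amod by auto
  obtain b where b: "b \<in> finv A P" "b \<notin> A" using inv_ne[OF P] by blast
  define B where "B = adjoin A b"
  have subB: "subring B" unfolding B_def by (rule adjoin_subring)
  have AB: "A \<subseteq> B" unfolding B_def adjoin_set using hp_const by blast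
  have "b ^ 1 \<in> hpoly A b (Suc 1)" by (rule hp_pow)
  then have bB: "b \<in> B" unfolding B_def adjoin_set by auto
  have "units_of_ring B = units_of_ring A"
  proof
    show "units_of_ring A \<subseteq> units_of_ring B" using AB unfolding units_of_ring_def by auto
    show "units_of_ring B \<subseteq> units_of_ring A"
    proof
      fix u assume "u \<in> units_of_ring B"
      then have u: "u \<in> B" "u \<noteq> 0" "inverse u \<in> B" unfolding units_of_ring_def by auto
      obtain n1 n2 where n: "u \<in> hpoly A b n1" "inverse u \<in> hpoly A b n2"
        using u unfolding B_def adjoin_hp by blast
      define N where "N = n1 + n2"
      have "u \<in> hpoly A b N" "inverse u \<in> hpoly A b N"
        using n hp_mono[of n1 N b] hp_mono[of n2 N b] unfolding N_def by auto
      then have uf: "u \<in> finv A (submod_pow A P N)" and vf: "inverse u \<in> finv A (submod_pow A P N)"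
        using hp_finv[OF P(1) b(1)] by auto
      define Pn where "Pn = submod_pow A P N"
      have amPn: "amod A Pn" unfolding Pn_def using pow_amod[OF sub amP] .
      define L where "L = submod_mult (pA A u) Pn"
      have Limg: "L = (\<lambda>y. u * y) ` Pn" unfolding L_def by (rule mul_pA[OF sub amPn])
      have LA: "L \<subseteq> A" using uf unfolding Limg finv_def Pn_def by auto
      have idL: "ring_ideal A L" unfolding ideal_amod L_def using LA mul_amod2[OF amPn] L_def by auto
      have amL: "amod A L" using idL ideal_amod by blast
      have "submod_pow A P (N + N) \<subseteq> L"
      proof -
        have "submod_mult Pn Pn \<subseteq> L"
        proof (rule mul_least)
          show "0 \<in> L" "\<And>x y. x \<in> L \<Longrightarrow> y \<in> L \<Longrightarrow> x + y \<in> L" using amL unfolding amod_def by auto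
          fix p q assume pq: "p \<in> Pn" "q \<in> Pn"
          have "inverse u * p \<in> A" using vf pq(1) unfolding finv_def Pn_def by blast
          then have "(inverse u * p) * q \<in> Pn" using amPn pq(2) unfolding amod_def by blast
          moreover have "p * q = u * ((inverse u * p) * q)" using u(2) by (simp add: field_simps)
          ultimately show "p * q \<in> L" unfolding Limg by blast
        qed
        then show ?thesis using pow_add[OF sub amP, of N N] unfolding Pn_def by simp
      qed
      then obtain j where j: "L = submod_pow A P j" using powers_above[OF P idL] by blast
      show "u \<in> units_of_ring A"
      proof (cases "N \<le> j")
        case True
        have "submod_mult (pA A u) Pn = submod_mult (submod_pow A P (j - N)) Pn"
          using j pow_add[OF sub amP, of "j - N" N] True unfolding L_def Pn_def by simp
        then have eqp: "pA A u = submod_pow A P (j - N)"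
          using cancel[OF P pA_amod[OF sub] pow_amod[OF sub amP]] unfolding Pn_def by blast
        have "j - N = 0"
        proof (rule ccontr)
          assume "j - N \<noteq> 0"
          then have "tors P" using eqp u(2) by (intro torsI[of "j - N" u]) auto
          then show False using ntP by blast
        qed
        then have "pA A u = A" using eqp by simp
        moreover have "u * 1 \<in> pA A u" using S(2) unfolding pA_def by blast
        ultimately have "u * 1 \<in> A" "1 \<in> pA A u" using S(2) by auto
        then obtain a where a: "a \<in> A" "1 = u * a" unfolding pA_def by auto
        then have "inverse u = a" using u(2) by (simp add: field_simps)
        then show ?thesis unfolding units_of_ring_def using \<open>u * 1 \<in> A\<close> u(2) a(1) by auto
      next
        case False
        then have "Pn = submod_mult (submod_pow A P (N - j)) (submod_pow A P j)"
          using pow_add[OF sub amP, of "N - j" j] unfolding Pn_def by simp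
        then have "submod_mult (submod_mult (pA A u) (submod_pow A P (N - j))) (submod_pow A P j)
            = submod_mult (pA A u) Pn"
          using mul_assoc[of "pA A u" "submod_pow A P (N - j)" "submod_pow A P j"] by simp
        also have "\<dots> = submod_mult A (submod_pow A P j)"
          using j mul_A[OF sub pow_amod[OF sub amP]] unfolding L_def by simp
        finally have "submod_mult (submod_mult (pA A u) (submod_pow A P (N - j))) (submod_pow A P j)
            = submod_mult A (submod_pow A P j)" .
        then have e1: "submod_mult (pA A u) (submod_pow A P (N - j)) = A"
          using cancel[OF P mul_amod[OF pA_amod[OF sub]] amod_A[OF sub]] by blast
        have "submod_pow A P (N - j) = submod_mult A (submod_pow A P (N - j))"
          using mul_A[OF sub pow_amod[OF sub amP]] by simp
        also have "\<dots> = submod_mult (submod_mult (pA A (inverse u)) (pA A u)) (submod_pow A P (N - j))"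
          using pA_mult[OF sub] u(2) pA_1[of A] by simp
        also have "\<dots> = submod_mult (pA A (inverse u)) (submod_mult (pA A u) (submod_pow A P (N - j)))"
          by (rule mul_assoc)
        also have "\<dots> = pA A (inverse u)" using e1 mul_A2[OF sub pA_amod[OF sub]] by simp
        finally have "tors P" using False u(2) by (intro torsI[of "N - j" "inverse u"]) auto
        then show ?thesis using ntP by blast
      qed
    qed
  qed
  moreover have "B \<noteq> A" using bB b(2) by blast
  moreover have "overring A B" unfolding overring_def using subB AB by blast
  ultimately show ?thesis unfolding B_def by blast
qed

end


lemma two_to_three:
  assumes "subring A" "overring A B" "localization_of A B"
  shows "well_centered A B"
  unfolding well_centered_def
proof
  fix b assume "b \<in> B"
  obtain T where T: "mult_closed_nonzero A T" "B = {a / s | a s. a \<in> A \<and> s \<in> T}"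
    using assms(3) unfolding localization_of_def by blast
  obtain a s where as: "a \<in> A" "s \<in> T" "b = a / s" using \<open>b \<in> B\<close> T(2) by blast
  have sA: "s \<in> A" "s \<noteq> 0" using as(2) T(1) unfolding mult_closed_nonzero_def by auto
  have "s \<in> B" using sA assms(2) unfolding overring_def by blast
  moreover have "inverse s \<in> B"
  proof -
    have "1 / s \<in> B" using T(2) as(2) sub_simps(2)[OF assms(1)] by blast
    then show ?thesis by (simp add: divide_inverse)
  qed
  ultimately have "s \<in> units_of_ring B" unfolding units_of_ring_def using sA by auto
  moreover have "s * b \<in> A" using as sA by simp
  ultimately show "\<exists>u\<in>units_of_ring B. u * b \<in> A" by blast
qed

lemma three_to_four:
  assumes A: "subring A" and wc: "\<forall>B. overring A B \<longrightarrow> well_centered A B"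
  shows "\<not> (\<exists>B b. overring A B \<and> B \<noteq> A \<and> B = adjoin A b \<and> units_of_ring B = units_of_ring A)"
proof
  assume "\<exists>B b. overring A B \<and> B \<noteq> A \<and> B = adjoin A b \<and> units_of_ring B = units_of_ring A"
  then obtain B where B: "overring A B" "B \<noteq> A" "units_of_ring B = units_of_ring A" by blast
  have "B \<subseteq> A"
  proof
    fix x assume "x \<in> B"
    then obtain u where u: "u \<in> units_of_ring B" "u * x \<in> A"
      using wc B(1) unfolding well_centered_def by blast
    then have "u \<in> A" "u \<noteq> 0" "inverse u \<in> A" using B(3) unfolding units_of_ring_def by auto
    then have "inverse u * (u * x) \<in> A" using u(2) sub_simps(5)[OF A] by blast
    then show "x \<in> A" using \<open>u \<noteq> 0\<close> by (simp add: mult.assoc[symmetric])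
  qed
  then show False using B(1,2) unfolding overring_def by blast
qed

theorem proposition3p13:
  fixes A :: "'k::field set"
  assumes "dedekind_domain A"
  shows "(torsion_class_group A \<longleftrightarrow> (\<forall>B. overring A B \<longrightarrow> localization_of A B))
       \<and> ((\<forall>B. overring A B \<longrightarrow> localization_of A B) \<longleftrightarrow> (\<forall>B. overring A B \<longrightarrow> well_centered A B))
       \<and> ((\<forall>B. overring A B \<longrightarrow> well_centered A B) \<longleftrightarrow>
          \<not> (\<exists>B b. overring A B \<and> B \<noteq> A \<and> B = adjoin A b \<and> units_of_ring B = units_of_ring A))"
proof -
  interpret dd A by unfold_locales (rule assms)
  have i12: "torsion_class_group A \<Longrightarrow> (\<forall>B. overring A B \<longrightarrow> localization_of A B)"
    using one_to_two by blast
  have i23: "(\<forall>B. overring A B \<longrightarrow> localization_of A B) \<Longrightarrow> (\<forall>B. overring A B \<longrightarrow> well_centered A B)"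
    using two_to_three[OF sub] by blast
  have i34: "(\<forall>B. overring A B \<longrightarrow> well_centered A B) \<Longrightarrow>
      \<not> (\<exists>B b. overring A B \<and> B \<noteq> A \<and> B = adjoin A b \<and> units_of_ring B = units_of_ring A)"
    using three_to_four[OF sub] by blast
  have i41: "\<not> (\<exists>B b. overring A B \<and> B \<noteq> A \<and> B = adjoin A b \<and> units_of_ring B = units_of_ring A)
      \<Longrightarrow> torsion_class_group A"
    using four_to_one by blast
  show ?thesis using i12 i23 i34 i41 by blast
qed


end
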